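(* For every $n\in\mathbb{N}$, $\phi(\omega^{2n})=P_n(1)$ and $\phi(\omega^{2n+1})=0$.
   Context: $\omega=a+a^*$ is the standard V-monotone Gaussian operator on the continuous V-monotone Fock space $\mathcal{CV}=\mathbb{C}\Lambda\oplus\bigoplus_{n\ge1}L^2(\mathcal X_n)$, with vacuum state $\phi(T)=\langle T\Lambda,\Lambda\rangle$, where $\mathcal X_n=\bigcup_{m=1}^n\{(x_1,\dots,x_n)\in\mathbb{R}^n:x_1>\dots>x_m<\dots<x_n\}$; $a\Lambda=\mathbb 1_{[0,1]}$, $(ag)(x,x_1,\dots,x_n)=\mathbb 1_{[0,1]}(x)\mathbb 1_{\mathcal X_{n+1}}(x,x_1,\dots,x_n)g(x_1,\dots,x_n)$, and $a^*$ is its adjoint, explicitly $a^*\Lambda=0$, $a^*g=(\int_0^1 g)\Lambda$ for $g\in L^2(\mathcal X_1)$, and $(a^*g)(\vec x)=\mathbb 1_{\mathcal X_{n,1}}(\vec x)\int_0^{x_1}g(x,\vec x)dx+\int_{x_1}^1 g(x,\vec x)dx$ for $g\in L^2(\mathcal X_{n+1})$, where $\mathcal X_{n,1}=\{x_1<\dots<x_n\}$. The polynomials $P_n,Q_n$ on $[0,1]$ are defined by $Q_0=P_0=1$, $Q_{n+1}(x)=\sum_{m=0}^n\big[\int_x^1Q_m(t)dt\big]Q_{n-m}(x)$, $P_{n+1}(x)=\sum_{m=0}^n\big[\int_0^xP_m(t)dt+\int_x^1Q_m(t)dt\big]P_{n-m}(x)$. *)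

theory Defs
  imports "HOL-Analysis.Analysis"
begin

(* A vector of the continuous V-monotone Fock space CV = C Lambda (+) (+)_{n>=1} L^2(X_n)
   is represented by a function on real lists: the value at [] is the coefficient of the
   vacuum Lambda, and the restriction to lists of length n >= 1 is (a representative of)
   the component in L^2(X_n). Representatives are kept supported on X_n. *)
type_synonym fock_vec = "real list \<Rightarrow> real"

definition in_X :: "real list \<Rightarrow> bool" where
  "in_X xs \<longleftrightarrow> (\<exists>m. 1 \<le> m \<and> m \<le> length xs
      \<and> (\<forall>i. i + 1 < m \<longrightarrow> xs ! i > xs ! (i + 1))
      \<and> (\<forall>i. m \<le> i + 1 \<and> i + 1 < length xs \<longrightarrow> xs ! i < xs ! (i + 1)))"

definition in_X1 :: "real list \<Rightarrow> bool" where
  "in_X1 xs \<longleftrightarrow> (\<forall>i. i + 1 < length xs \<longrightarrow> xs ! i < xs ! (i + 1))"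

definition vac :: fock_vec where
  "vac xs = (if xs = [] then 1 else 0)"

fun creation :: "fock_vec \<Rightarrow> fock_vec" where
  "creation F [] = 0"
| "creation F (x # xs) =
     (if x \<in> {0..1} \<and> in_X (x # xs) then F xs else 0)"

fun annihilation :: "fock_vec \<Rightarrow> fock_vec" where
  "annihilation F [] = integral {0..1} (\<lambda>x. F [x])"
| "annihilation F (y # ys) =
     (if in_X (y # ys) then
        (if in_X1 (y # ys) then integral {0..y} (\<lambda>x. F (x # y # ys)) else 0)
        + integral {y..1} (\<lambda>x. F (x # y # ys))
      else 0)"

definition omega :: "fock_vec \<Rightarrow> fock_vec" where
  "omega F = (\<lambda>xs. creation F xs + annihilation F xs)"

(* vacuum state phi(T) = <T Lambda, Lambda>, i.e. the Lambda-coefficient of T Lambda *)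
definition vacuum_state :: "(fock_vec \<Rightarrow> fock_vec) \<Rightarrow> real" where
  "vacuum_state T = T vac []"

fun Qpoly :: "nat \<Rightarrow> real \<Rightarrow> real" where
  "Qpoly 0 = (\<lambda>x. 1)"
| "Qpoly (Suc n) = (\<lambda>x. \<Sum>m\<le>n. integral {x..1} (Qpoly m) * Qpoly (n - m) x)"

fun Ppoly :: "nat \<Rightarrow> real \<Rightarrow> real" where
  "Ppoly 0 = (\<lambda>x. 1)"
| "Ppoly (Suc n) = (\<lambda>x. \<Sum>m\<le>n.
      (integral {0..x} (Ppoly m) + integral {x..1} (Qpoly m)) * Ppoly (n - m) x)"

end

theory Submission imports Defs begin

fun exc :: "nat \<Rightarrow> real \<Rightarrow> bool \<Rightarrow> real" where
  "exc 0 x b = 1"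
| "exc (Suc 0) x b = 0"
| "exc (Suc (Suc J)) x b = (\<Sum>j\<le>J. ((if b then integral {0..x} (\<lambda>y. exc j y True) else 0)
      + integral {x..1} (\<lambda>y. exc j y False)) * exc (J - j) x b)"

definition Ic :: "nat \<Rightarrow> real \<Rightarrow> bool \<Rightarrow> real" where
  "Ic j x b = (if b then integral {0..x} (\<lambda>y. exc j y True) else 0)
      + integral {x..1} (\<lambda>y. exc j y False)"

lemma exc_SS: "exc (Suc (Suc J)) x b = (\<Sum>j\<le>J. Ic j x b * exc (J - j) x b)"
  by (simp add: Ic_def)

lemma exc_cont: "continuous_on {0..1} (\<lambda>x. exc j x b)"
proof (induction j arbitrary: b rule: less_induct)
  case (less j)
  show ?case
  proof (cases j)
    case 0 then show ?thesis by simp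
  next
    case (Suc j')
    show ?thesis
    proof (cases j')
      case 0 then show ?thesis using Suc by simp
    next
      case (Suc J)
      have jj: "j = Suc (Suc J)" using \<open>j = Suc j'\<close> Suc by simp
      have ic: "continuous_on {0..1} (\<lambda>x. Ic i x b)" if "i \<le> J" for i
      proof -
        have c1: "continuous_on {0..1} (\<lambda>y. exc i y c)" for c using less[of i] that jj by simp
        have i1: "(\<lambda>y. exc i y c) integrable_on {0..1}" for c
          by (rule integrable_continuous_interval[OF c1])
        have a: "continuous_on {0..1} (\<lambda>x. integral {0..x} (\<lambda>y. exc i y True))"
          by (rule indefinite_integral_continuous_1[OF i1])
        have b: "continuous_on {0..1} (\<lambda>x. integral {x..1} (\<lambda>y. exc i y False))"
          by (rule indefinite_integral_continuous_1'[OF i1])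
        show ?thesis unfolding Ic_def
          by (cases b) (auto intro!: continuous_intros a b)
      qed
      have ec: "continuous_on {0..1} (\<lambda>x. exc (J - i) x b)" if "i \<le> J" for i
        using less[of "J - i"] jj by simp
      show ?thesis unfolding jj exc_SS
        by (intro continuous_on_sum continuous_on_mult ic ec) auto
    qed
  qed
qed

lemma exc_int: "{c..d} \<subseteq> {0..1} \<Longrightarrow> (\<lambda>y. exc j y b) integrable_on {c..d}"
  by (rule integrable_subinterval_real[OF integrable_continuous_interval[OF exc_cont]])

lemma sum_even_odd: "(\<Sum>j\<le>2*m. f j) = (\<Sum>p\<le>m. f (2*p)) + (\<Sum>p<m. f (2*p+1::nat)) "
  for f :: "nat \<Rightarrow> real"
proof (induction m)
  case 0 then show ?case by simp
next
  case (Suc m)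
  have "2 * Suc m = Suc (Suc (2*m))" by simp
  then show ?case using Suc by (simp add: sum.atMost_Suc)
qed

lemma exc_parity: "\<forall>x b. exc (2*n+1) x b = 0 \<and> exc (2*n) x b = (if b then Ppoly n x else Qpoly n x)"
proof (induction n rule: less_induct)
  case (less n)
  show ?case
  proof (cases n)
    case 0 then show ?thesis by simp
  next
    case (Suc m)
    have odd0: "exc (2*p+1) y c = 0" if "p \<le> m" for p y c using less[of p] Suc that by auto
    have evn: "exc (2*p) y c = (if c then Ppoly p y else Qpoly p y)" if "p \<le> m" for p y c
      using less[of p] Suc that by auto
    have icodd: "Ic (2*p+1) x c = 0" if "p \<le> m" for p x c
      unfolding Ic_def using odd0[OF that] by simp
    have icev: "Ic (2*p) x c = (if c then integral {0..x} (Ppoly p) else 0) + integral {x..1} (Qpoly p)"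
      if "p \<le> m" for p x c
    proof -
      have "(\<lambda>y. exc (2*p) y True) = Ppoly p" "(\<lambda>y. exc (2*p) y False) = Qpoly p"
        using evn[OF that] by auto
      then show ?thesis unfolding Ic_def by simp
    qed
    have o: "exc (2*n+1) x b = 0" for x b
    proof -
      have "exc (2*n+1) x b = (\<Sum>j\<le>2*m+1. Ic j x b * exc (2*m+1 - j) x b)"
        using Suc exc_SS[of "2*m+1"] by simp
      also have "\<dots> = 0"
      proof (rule sum.neutral, rule ballI)
        fix j assume "j \<in> {..2*m+1}"
        then have j: "j \<le> 2*m+1" by simp
        show "Ic j x b * exc (2*m+1 - j) x b = 0"
        proof (cases "even j")
          case True
          then obtain p where "j = 2*p" by blast
          then have "2*m+1 - j = 2*(m-p)+1" "m - p \<le> m" using j by auto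
          then show ?thesis using odd0 by simp
        next
          case False
          then obtain p where "j = 2*p+1" using oddE by blast
          then show ?thesis using icodd[of p] j by simp
        qed
      qed
      finally show ?thesis .
    qed
    have e: "exc (2*n) x b = (if b then Ppoly n x else Qpoly n x)" for x b
    proof -
      have "exc (2*n) x b = (\<Sum>j\<le>2*m. Ic j x b * exc (2*m - j) x b)"
        using Suc exc_SS[of "2*m"] by simp
      also have "\<dots> = (\<Sum>p\<le>m. Ic (2*p) x b * exc (2*m - 2*p) x b)
          + (\<Sum>p<m. Ic (2*p+1) x b * exc (2*m - (2*p+1)) x b)"
        by (rule sum_even_odd)
      also have "(\<Sum>p<m. Ic (2*p+1) x b * exc (2*m - (2*p+1)) x b) = 0"
        using icodd by simp
      also have "(\<Sum>p\<le>m. Ic (2*p) x b * exc (2*m - 2*p) x b)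
          = (\<Sum>p\<le>m. ((if b then integral {0..x} (Ppoly p) else 0) + integral {x..1} (Qpoly p))
               * (if b then Ppoly (m-p) x else Qpoly (m-p) x))"
      proof (rule sum.cong[OF refl])
        fix p assume "p \<in> {..m}"
        then have p: "p \<le> m" by simp
        have "2*m - 2*p = 2*(m-p)" by simp
        then show "Ic (2*p) x b * exc (2*m - 2*p) x b = ((if b then integral {0..x} (Ppoly p) else 0) + integral {x..1} (Qpoly p))
               * (if b then Ppoly (m-p) x else Qpoly (m-p) x)"
          using icev[OF p] evn[of "m-p"] by simp
      qed
      also have "\<dots> + 0 = (if b then Ppoly n x else Qpoly n x)"
        using Suc by (cases b) simp_all
      finally show ?thesis .
    qed
    show ?thesis using o e by blast
  qed
qed


lemma in_X1_cons2: "in_X1 (a # b # l) \<longleftrightarrow> a < b \<and> in_X1 (b # l)"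
  unfolding in_X1_def
proof safe
  fix i assume H: "\<forall>i. i + 1 < length (a # b # l) \<longrightarrow> (a # b # l) ! i < (a # b # l) ! (i + 1)"
  show "a < b" using H[rule_format, of 0] by simp
  assume "i + 1 < length (b # l)"
  then show "(b # l) ! i < (b # l) ! (i + 1)" using H[rule_format, of "Suc i"] by simp
next
  fix i assume "a < b" and H: "\<forall>i. i + 1 < length (b # l) \<longrightarrow> (b # l) ! i < (b # l) ! (i + 1)"
    and "i + 1 < length (a # b # l)"
  then show "(a # b # l) ! i < (a # b # l) ! (i + 1)"
    by (cases i) auto
qed

lemma in_X_single: "in_X [x]"
  unfolding in_X_def by (rule exI[of _ 1]) auto

lemma in_X_nil: "\<not> in_X []"
  unfolding in_X_def by auto

lemma in_X1_single: "in_X1 [x]"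
  unfolding in_X1_def by auto

lemma in_X_cons2: "in_X (y # x # l) \<longleftrightarrow> (x < y \<and> in_X (x # l)) \<or> (y < x \<and> in_X1 (x # l))"
proof
  assume "in_X (y # x # l)"
  then obtain m where m1: "1 \<le> m" and m2: "m \<le> length (y # x # l)"
    and D: "\<forall>i. i + 1 < m \<longrightarrow> (y # x # l) ! i > (y # x # l) ! (i + 1)"
    and I: "\<forall>i. m \<le> i + 1 \<and> i + 1 < length (y # x # l) \<longrightarrow> (y # x # l) ! i < (y # x # l) ! (i + 1)"
    unfolding in_X_def by blast
  show "(x < y \<and> in_X (x # l)) \<or> (y < x \<and> in_X1 (x # l))"
  proof (cases "m = 1")
    case True
    have "y < x" using I[rule_format, of 0] True by simp
    moreover have "in_X1 (x # l)" unfolding in_X1_def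
    proof (intro allI impI)
      fix i assume "i + 1 < length (x # l)"
      then show "(x # l) ! i < (x # l) ! (i + 1)" using I[rule_format, of "Suc i"] True by simp
    qed
    ultimately show ?thesis by blast
  next
    case False
    then have m: "2 \<le> m" using m1 by simp
    have "x < y" using D[rule_format, of 0] m by simp
    moreover have "in_X (x # l)" unfolding in_X_def
    proof (rule exI[of _ "m - 1"], intro conjI allI impI)
      show "1 \<le> m - 1" using m by simp
      show "m - 1 \<le> length (x # l)" using m2 by simp
      fix i
      show "i + 1 < m - 1 \<Longrightarrow> (x # l) ! (i + 1) < (x # l) ! i"
        using D[rule_format, of "Suc i"] by simp
      assume "m - 1 \<le> i + 1 \<and> i + 1 < length (x # l)"
      then have "m \<le> Suc i + 1 \<and> Suc i + 1 < length (y # x # l)" by (cases m) auto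
      then show "(x # l) ! i < (x # l) ! (i + 1)"
        using I[rule_format, of "Suc i"] by simp
    qed
    ultimately show ?thesis by blast
  qed
next
  assume "(x < y \<and> in_X (x # l)) \<or> (y < x \<and> in_X1 (x # l))"
  then show "in_X (y # x # l)"
  proof
    assume A: "x < y \<and> in_X (x # l)"
    then obtain m where m1: "1 \<le> m" and m2: "m \<le> length (x # l)"
      and D: "\<forall>i. i + 1 < m \<longrightarrow> (x # l) ! i > (x # l) ! (i + 1)"
      and I: "\<forall>i. m \<le> i + 1 \<and> i + 1 < length (x # l) \<longrightarrow> (x # l) ! i < (x # l) ! (i + 1)"
      unfolding in_X_def by blast
    show ?thesis unfolding in_X_def
    proof (rule exI[of _ "m + 1"], intro conjI allI impI)
      show "1 \<le> m + 1" by simp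
      show "m + 1 \<le> length (y # x # l)" using m2 by simp
      fix i
      show "i + 1 < m + 1 \<Longrightarrow> (y # x # l) ! (i + 1) < (y # x # l) ! i"
        using D A by (cases i) auto
      show "m + 1 \<le> i + 1 \<and> i + 1 < length (y # x # l) \<Longrightarrow> (y # x # l) ! i < (y # x # l) ! (i + 1)"
        using I m1 by (cases i) auto
    qed
  next
    assume "y < x \<and> in_X1 (x # l)"
    then have "in_X1 (y # x # l)" using in_X1_cons2 by blast
    then show ?thesis unfolding in_X_def in_X1_def
      by (intro exI[of _ 1]) auto
  qed
qed

lemma sum_triangle_nat: "(\<Sum>j<n. \<Sum>i<n-j. f j i) = (\<Sum>J<n. \<Sum>j\<le>J. f j (J - j))"
  for f :: "nat \<Rightarrow> nat \<Rightarrow> real"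
proof (induction n)
  case 0 then show ?case by simp
next
  case (Suc n)
  have "(\<Sum>j<Suc n. \<Sum>i<Suc n-j. f j i) = (\<Sum>j<n. \<Sum>i<Suc n-j. f j i) + f n 0" by simp
  also have "(\<Sum>j<n. \<Sum>i<Suc n-j. f j i) = (\<Sum>j<n. (\<Sum>i<n-j. f j i) + f j (n - j))"
    by (rule sum.cong[OF refl]) (simp add: Suc_diff_le)
  also have "\<dots> = (\<Sum>j<n. \<Sum>i<n-j. f j i) + (\<Sum>j<n. f j (n - j))" by (simp add: sum.distrib)
  finally show ?case using Suc by (simp add: lessThan_Suc_atMost[symmetric])
qed

lemma alg:
  fixes E I a :: "nat \<Rightarrow> real"
  assumes "E 0 = 1" "E 1 = 0" "\<And>J. E (Suc (Suc J)) = (\<Sum>j\<le>J. I j * E (J - j))"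
  shows "(\<Sum>J<Suc k. E J * a (k - J)) = a k + (\<Sum>j<k. I j * (\<Sum>i<k-1-j. E i * a (k-1-j-1-i)))"
proof (cases k)
  case 0 then show ?thesis using assms by simp
next
  case (Suc n)
  have sh: "(\<Sum>J<Suc (Suc n). g J) = g 0 + (g (Suc 0) + (\<Sum>J<n. g (Suc (Suc J))))" for g :: "nat \<Rightarrow> real"
    by (simp only: sum.lessThan_Suc_shift)
  have L: "(\<Sum>J<Suc k. E J * a (k - J)) = a (Suc n) + (\<Sum>J<n. E (Suc (Suc J)) * a (n - 1 - J))"
    using sh[of "\<lambda>J. E J * a (Suc n - J)"] assms Suc by simp
  have "(\<Sum>j<k. I j * (\<Sum>i<k-1-j. E i * a (k-1-j-1-i)))
      = (\<Sum>j<n. \<Sum>i<n-j. I j * E i * a (n - 1 - (j + i)))"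
    using Suc by (simp add: sum_distrib_left mult.assoc algebra_simps)
  also have "\<dots> = (\<Sum>J<n. \<Sum>j\<le>J. I j * E (J - j) * a (n - 1 - (j + (J - j))))"
    by (rule sum_triangle_nat)
  also have "\<dots> = (\<Sum>J<n. E (Suc (Suc J)) * a (n - 1 - J))"
    by (rule sum.cong[OF refl]) (simp add: assms(3) sum_distrib_right)
  finally show ?thesis using L Suc by simp
qed


definition valid :: "real list \<Rightarrow> bool" where
  "valid l \<longleftrightarrow> in_X l \<and> (\<forall>z\<in>set l. 0 \<le> z \<and> z \<le> 1)"

definition Av :: "nat \<Rightarrow> fock_vec" where
  "Av k = (omega ^^ k) vac"

lemma Av_Suc: "Av (Suc k) l = creation (Av k) l + annihilation (Av k) l"
  unfolding Av_def by (simp add: omega_def)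

lemma Av_0: "Av 0 = vac" unfolding Av_def by simp

lemma valid_cons2: "valid (x # xs) \<Longrightarrow>
   valid (y # x # xs) \<longleftrightarrow> 0 \<le> y \<and> y \<le> 1 \<and> (x < y \<or> (y < x \<and> in_X1 (x # xs)))"
  unfolding valid_def using in_X_cons2 by auto

lemma supp: "l \<noteq> [] \<Longrightarrow> \<not> valid l \<Longrightarrow> Av k l = 0"
proof (induction k arbitrary: l)
  case 0 then show ?case by (simp add: Av_0 vac_def)
next
  case (Suc k)
  then obtain x xs where l: "l = x # xs" by (cases l) auto
  have c: "creation (Av k) (x # xs) = 0"
  proof (cases "x \<in> {0..1} \<and> in_X (x # xs)")
    case True
    then have "xs \<noteq> []" using Suc.prems l in_X_single by (auto simp: valid_def)
    moreover have "\<not> valid xs" using Suc.prems l True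
      unfolding valid_def by (auto simp: in_X_cons2)
    ultimately show ?thesis using Suc.IH True by simp
  qed auto
  have z: "Av k (y # x # xs) = 0" if "in_X (x # xs)" for y
    using Suc.IH[of "y # x # xs"] Suc.prems l that by (auto simp: valid_def)
  have a: "annihilation (Av k) (x # xs) = 0"
    using z by simp
  show ?case using c a l Av_Suc by simp
qed

lemma int_sum_exc:
  assumes "0 \<le> s" "t \<le> 1"
  shows "integral {s..t} (\<lambda>y. \<Sum>j<k. exc j y c * a j) = (\<Sum>j<k. integral {s..t} (\<lambda>y. exc j y c) * a j)"
proof -
  have "integral {s..t} (\<lambda>y. \<Sum>j<k. exc j y c * a j) = (\<Sum>j<k. integral {s..t} (\<lambda>y. exc j y c * a j))"
    using assms by (intro integral_sum) (auto intro!: integrable_on_mult_left exc_int)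
  then show ?thesis by simp
qed


lemma main: "Av k [] = exc k 1 True \<and>
  (\<forall>x xs. valid (x # xs) \<longrightarrow> Av k (x # xs) = (\<Sum>j<k. exc j x (in_X1 (x # xs)) * Av (k - 1 - j) xs))"
proof (induction k rule: less_induct)
  case (less k)
  show ?case
  proof (cases k)
    case 0 then show ?thesis by (simp add: Av_0 vac_def)
  next
    case (Suc k')
    have IH1: "Av m [] = exc m 1 True" if "m \<le> k'" for m using less[of m] Suc that by simp
    have IH2: "Av m (x # xs) = (\<Sum>j<m. exc j x (in_X1 (x # xs)) * Av (m - 1 - j) xs)"
      if "m \<le> k'" "valid (x # xs)" for m x xs using less[of m] Suc that by simp
    have v1: "Av (Suc k') [] = integral {0..1} (\<lambda>x. Av k' [x])"
      using Av_Suc by simp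
    also have "\<dots> = integral {0..1} (\<lambda>x. \<Sum>j<k'. exc j x True * exc (k' - 1 - j) 1 True)"
    proof (rule integral_cong)
      fix x :: real assume "x \<in> {0..1}"
      then have "valid [x]" by (simp add: valid_def in_X_single)
      then show "Av k' [x] = (\<Sum>j<k'. exc j x True * exc (k' - 1 - j) 1 True)"
        using IH2[of k' x "[]"] IH1 in_X1_single by simp
    qed
    also have "\<dots> = (\<Sum>j<k'. integral {0..1} (\<lambda>x. exc j x True) * exc (k' - 1 - j) 1 True)"
      by (rule int_sum_exc) auto
    also have "\<dots> = exc (Suc k') 1 True"
    proof (cases k')
      case 0 then show ?thesis by simp
    next
      case (Suc n)
      show ?thesis unfolding Suc exc_SS Ic_def
        by (simp add: lessThan_Suc_atMost)
    qed
    finally have part1: "Av k [] = exc k 1 True" using Suc by simp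
    have part2: "Av k (x # xs) = (\<Sum>j<k. exc j x (in_X1 (x # xs)) * Av (k - 1 - j) xs)"
      if V: "valid (x # xs)" for x xs
    proof -
      define b where "b = in_X1 (x # xs)"
      have x01: "0 \<le> x" "x \<le> 1" using V by (auto simp: valid_def)
      have inx: "in_X (x # xs)" using V by (simp add: valid_def)
      have cr: "creation (Av k') (x # xs) = Av k' xs" using x01 inx by simp
      define a where "a j = Av (k' - 1 - j) (x # xs)" for j
      have H1: "Av k' (y # x # xs) = (\<Sum>j<k'. exc j y True * a j)"
        if "b" "y \<in> {0..x} - {x}" for y
      proof -
        have "valid (y # x # xs)" "in_X1 (y # x # xs)"
          using that valid_cons2[OF V] x01 in_X1_cons2 b_def by auto
        then show ?thesis using IH2[of k' y "x # xs"] a_def by simp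
      qed
      have H2: "Av k' (y # x # xs) = (\<Sum>j<k'. exc j y False * a j)"
        if "y \<in> {x..1} - {x}" for y
      proof -
        have "valid (y # x # xs)" "\<not> in_X1 (y # x # xs)"
          using that valid_cons2[OF V] x01 in_X1_cons2 by auto
        then show ?thesis using IH2[of k' y "x # xs"] a_def by simp
      qed
      have I1: "b \<Longrightarrow> integral {0..x} (\<lambda>y. Av k' (y # x # xs))
           = (\<Sum>j<k'. integral {0..x} (\<lambda>y. exc j y True) * a j)"
      proof -
        assume b
        have "integral {0..x} (\<lambda>y. Av k' (y # x # xs)) = integral {0..x} (\<lambda>y. \<Sum>j<k'. exc j y True * a j)"
          by (rule integral_spike[of "{x}"]) (use H1 \<open>b\<close> in auto)
        also have "\<dots> = (\<Sum>j<k'. integral {0..x} (\<lambda>y. exc j y True) * a j)"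
          by (rule int_sum_exc) (use x01 in auto)
        finally show ?thesis .
      qed
      have I2: "integral {x..1} (\<lambda>y. Av k' (y # x # xs))
           = (\<Sum>j<k'. integral {x..1} (\<lambda>y. exc j y False) * a j)"
      proof -
        have "integral {x..1} (\<lambda>y. Av k' (y # x # xs)) = integral {x..1} (\<lambda>y. \<Sum>j<k'. exc j y False * a j)"
          by (rule integral_spike[of "{x}"]) (use H2 in auto)
        also have "\<dots> = (\<Sum>j<k'. integral {x..1} (\<lambda>y. exc j y False) * a j)"
          by (rule int_sum_exc) (use x01 in auto)
        finally show ?thesis .
      qed
      have an: "annihilation (Av k') (x # xs) = (\<Sum>j<k'. Ic j x b * a j)"
        using inx I1 I2 by (cases b) (simp_all add: Ic_def b_def[symmetric] sum.distrib algebra_simps)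
      have aj: "a j = (\<Sum>i<k'-1-j. exc i x b * Av (k'-1-j-1-i) xs)" for j
        unfolding a_def b_def by (rule IH2[OF _ V]) simp
      have "Av k (x # xs) = Av k' xs + (\<Sum>j<k'. Ic j x b * (\<Sum>i<k'-1-j. exc i x b * Av (k'-1-j-1-i) xs))"
        using Suc Av_Suc cr an aj by simp
      also have "\<dots> = (\<Sum>J<Suc k'. exc J x b * Av (k' - J) xs)"
        by (rule alg[symmetric]) (simp_all add: Ic_def)
      finally show ?thesis using Suc b_def by simp
    qed
    show ?thesis using part1 part2 by blast
  qed
qed

theorem mainTheorem3:
  fixes n :: nat
  shows "vacuum_state (omega ^^ (2 * n)) = Ppoly n 1
       \<and> vacuum_state (omega ^^ (2 * n + 1)) = 0"
proof -
  have vs: "vacuum_state (omega ^^ k) = exc k 1 True" for k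
    using main[of k] by (simp add: vacuum_state_def Av_def)
  show ?thesis unfolding vs using exc_parity[of n] by simp
qed

end
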